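(* Let $T$ be a $g_t$-twisted trace on $\mathcal{A}$. Then the following are equivalent: (i) $T$ is positive; (ii) $T(a\rho(a))>0$ for every nonzero $a\in\mathcal{A}_0\cup\mathcal{A}_1$; (iii) for every nonzero $R\in\mathbb{C}[z,z^{-1}]$, \[ T\big(R(z)\overline{R}(z^{-1})\big)>0\quad\text{and}\quad e^{-\pi i c}\,T\big(P(q^{-1}z)R(q^{-1}z)\overline{R}(qz^{-1})\big)>0 . \]
   Context: Let $0<q<1$ and let $P$ be a Laurent polynomial with $n>0$ nonzero roots which is real-valued on the unit circle $S^1$. $\mathcal{A}=\mathcal{A}_P$ is the algebra generated by $u,v,Z,Z^{-1}$ with relations $ZZ^{-1}=Z^{-1}Z=1$, $ZuZ^{-1}=q^2u$, $ZvZ^{-1}=q^{-2}v$, $uv=P(q^{-1}Z)$, $vu=P(qZ)$; $\mathcal{A}_i=\{a: ZaZ^{-1}=q^{2i}a\}$, $\mathcal{A}_0=\mathbb{C}[Z,Z^{-1}]\cong\mathbb{C}[z,z^{-1}]$. Let $t\in\mathbb{C}$ with $|t|=1$, $t=e^{2\pi i c}$, $c\in[0,1)$; $g_t$ is the automorphism $u\mapsto tu$, $v\mapsto t^{-1}v$, $Z\mapsto Z$, and a $g_t$-twisted trace is a linear $T$ with $T(ab)=T(bg_t(a))$. Let $\rho$ be the antilinear automorphism of $\mathcal{A}$ with $\rho(u)=e^{-\pi i c}v$, $\rho(v)=e^{\pi i c}u$, $\rho(Z)=Z^{-1}$ (it exists since $P$ is real on $S^1$; $\rho^2=g_t$). A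 $g_t$-twisted trace $T$ is positive if the sesquilinear form $(a,b)_T=T(a\rho(b))$ is positive definite. For a Laurent polynomial $R$, $\overline{R}$ is obtained by conjugating coefficients. *)

theory Defs
  imports Complex_Main
begin

text \<open>An algebra over the complex numbers is rendered as a
  ring 'a together with a central unital ring embedding emb of the complex numbers.
  The algebra A_P (defined by generators and relations) is characterised up to
  isomorphism by the relations together with the standard (PBW-type) basis
  u^i Z^k (i >= 0), v^(-i) Z^k (i < 0), k integer.\<close>

definition zpow :: "'a::ring_1 \<Rightarrow> 'a \<Rightarrow> int \<Rightarrow> 'a" where
  "zpow X Xi k = (if 0 \<le> k then X ^ nat k else Xi ^ nat (- k))"

text \<open>Laurent polynomial with coefficient function r (finite support), evaluated
  at an invertible element X with inverse Xi.\<close>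
definition lp :: "(complex \<Rightarrow> 'a::ring_1) \<Rightarrow> (int \<Rightarrow> complex) \<Rightarrow> 'a \<Rightarrow> 'a \<Rightarrow> 'a" where
  "lp emb r X Xi = (\<Sum>k\<in>{k. r k \<noteq> 0}. emb (r k) * zpow X Xi k)"

definition Pev :: "(int \<Rightarrow> complex) \<Rightarrow> complex \<Rightarrow> complex" where
  "Pev p z = (\<Sum>k\<in>{k. p k \<noteq> 0}. p k * z powi k)"

definition gwa_mon :: "'a::ring_1 \<Rightarrow> 'a \<Rightarrow> 'a \<Rightarrow> 'a \<Rightarrow> int \<Rightarrow> int \<Rightarrow> 'a" where
  "gwa_mon u v Z Zi i k = (if 0 \<le> i then u ^ nat i else v ^ nat (- i)) * zpow Z Zi k"

definition is_A_P :: "real \<Rightarrow> (int \<Rightarrow> complex) \<Rightarrow> (complex \<Rightarrow> 'a::ring_1) \<Rightarrow> 'a \<Rightarrow> 'a \<Rightarrow> 'a \<Rightarrow> 'a \<Rightarrow> bool" where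
  "is_A_P q p emb u v Z Zi \<longleftrightarrow>
     (\<forall>x y. emb (x + y) = emb x + emb y) \<and> (\<forall>x y. emb (x * y) = emb x * emb y) \<and>
     emb 1 = 1 \<and> (\<forall>x a. emb x * a = a * emb x) \<and>
     Z * Zi = 1 \<and> Zi * Z = 1 \<and>
     Z * u * Zi = emb (complex_of_real (q ^ 2)) * u \<and>
     Z * v * Zi = emb (complex_of_real (inverse q ^ 2)) * v \<and>
     u * v = lp emb p (emb (complex_of_real (inverse q)) * Z) (emb (complex_of_real q) * Zi) \<and>
     v * u = lp emb p (emb (complex_of_real q) * Z) (emb (complex_of_real (inverse q)) * Zi) \<and>
     (\<forall>a. \<exists>cf. finite {pk. cf pk \<noteq> 0} \<and>
        a = (\<Sum>pk\<in>{pk. cf pk \<noteq> 0}. emb (cf pk) * gwa_mon u v Z Zi (fst pk) (snd pk))) \<and>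
     (\<forall>cf. finite {pk. cf pk \<noteq> 0} \<and>
        (\<Sum>pk\<in>{pk. cf pk \<noteq> 0}. emb (cf pk) * gwa_mon u v Z Zi (fst pk) (snd pk)) = 0
        \<longrightarrow> (\<forall>pk. cf pk = 0))"

definition Adeg :: "real \<Rightarrow> (complex \<Rightarrow> 'a::ring_1) \<Rightarrow> 'a \<Rightarrow> 'a \<Rightarrow> int \<Rightarrow> 'a set" where
  "Adeg q emb Z Zi i = {a. Z * a * Zi = emb (complex_of_real q powi (2 * i)) * a}"

definition is_g :: "(complex \<Rightarrow> 'a::ring_1) \<Rightarrow> 'a \<Rightarrow> 'a \<Rightarrow> 'a \<Rightarrow> 'a \<Rightarrow> complex \<Rightarrow> ('a \<Rightarrow> 'a) \<Rightarrow> bool" where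
  "is_g emb u v Z Zi t g \<longleftrightarrow>
     (\<forall>a b. g (a + b) = g a + g b) \<and> (\<forall>a b. g (a * b) = g a * g b) \<and>
     (\<forall>x a. g (emb x * a) = emb x * g a) \<and>
     g u = emb t * u \<and> g v = emb (inverse t) * v \<and> g Z = Z \<and> g Zi = Zi"

definition is_rho :: "(complex \<Rightarrow> 'a::ring_1) \<Rightarrow> 'a \<Rightarrow> 'a \<Rightarrow> 'a \<Rightarrow> 'a \<Rightarrow> real \<Rightarrow> ('a \<Rightarrow> 'a) \<Rightarrow> bool" where
  "is_rho emb u v Z Zi c \<rho> \<longleftrightarrow>
     (\<forall>a b. \<rho> (a + b) = \<rho> a + \<rho> b) \<and> (\<forall>a b. \<rho> (a * b) = \<rho> a * \<rho> b) \<and>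
     (\<forall>x a. \<rho> (emb x * a) = emb (cnj x) * \<rho> a) \<and>
     \<rho> u = emb (exp (- (complex_of_real pi * \<i> * complex_of_real c))) * v \<and>
     \<rho> v = emb (exp (complex_of_real pi * \<i> * complex_of_real c)) * u \<and>
     \<rho> Z = Zi \<and> \<rho> Zi = Z"

definition twisted_trace :: "(complex \<Rightarrow> 'a::ring_1) \<Rightarrow> ('a \<Rightarrow> 'a) \<Rightarrow> ('a \<Rightarrow> complex) \<Rightarrow> bool" where
  "twisted_trace emb g T \<longleftrightarrow>
     (\<forall>a b. T (a + b) = T a + T b) \<and> (\<forall>x a. T (emb x * a) = x * T a) \<and>
     (\<forall>a b. T (a * b) = T (b * g a))"

definition cpos :: "complex \<Rightarrow> bool" where
  "cpos x \<longleftrightarrow> x \<in> \<real> \<and> 0 < Re x"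

definition positive_trace :: "('a::ring_1 \<Rightarrow> 'a) \<Rightarrow> ('a \<Rightarrow> complex) \<Rightarrow> bool" where
  "positive_trace \<rho> T \<longleftrightarrow> (\<forall>a. a \<noteq> 0 \<longrightarrow> cpos (T (a * \<rho> a)))"

end

theory Submission
  imports Defs
begin


lemma zpow_nonneg: "0 \<le> k \<Longrightarrow> zpow X Xi k = X ^ nat k" by (simp add: zpow_def)
lemma zpow_neg: "k < 0 \<Longrightarrow> zpow X Xi k = Xi ^ nat (-k)" by (simp add: zpow_def)
lemma zpow_0[simp]: "zpow X Xi 0 = 1" by (simp add: zpow_def)

lemma zpow_up:
  fixes X Xi :: "'a::ring_1"
  assumes "X * Xi = 1" "Xi * X = 1"
  shows "zpow X Xi k * X = zpow X Xi (k+1)"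
proof (cases "0 \<le> k")
  case True
  then show ?thesis by (simp add: zpow_def nat_add_distrib power_Suc2[symmetric])
next
  case False
  then obtain n where n: "nat (-k) = Suc n" by (metis gr0_implies_Suc zero_less_nat_eq neg_0_less_iff_less not_le)
  have "nat (-(k+1)) = n" using n by linarith
  moreover have "Xi ^ Suc n * X = Xi ^ n" by (simp only: power_Suc2 mult.assoc assms mult_1_right)
  ultimately show ?thesis using False n by (auto simp: zpow_def)
qed

lemma zpow_down:
  fixes X Xi :: "'a::ring_1"
  assumes "X * Xi = 1" "Xi * X = 1"
  shows "zpow X Xi k * Xi = zpow X Xi (k - 1)"
proof (cases "0 < k")
  case False
  then show ?thesis by (simp add: zpow_def nat_add_distrib power_Suc2[symmetric] Suc_nat_eq_nat_zadd1)
next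
  case True
  then obtain n where n: "nat k = Suc n" by (metis gr0_implies_Suc zero_less_nat_eq)
  have "nat (k - 1) = n" using n by linarith
  moreover have "X ^ Suc n * Xi = X ^ n" by (simp only: power_Suc2 mult.assoc assms mult_1_right)
  ultimately show ?thesis using True n by (auto simp: zpow_def)
qed

lemma zpow_add:
  fixes X Xi :: "'a::ring_1"
  assumes "X * Xi = 1" "Xi * X = 1"
  shows "zpow X Xi k * zpow X Xi l = zpow X Xi (k + l)"
proof (induction l rule: int_induct[where k=0])
  case base
  then show ?case by simp
next
  case (step1 i)
  have "zpow X Xi (i+1) = zpow X Xi i * X" using zpow_up[OF assms] by simp
  then have "zpow X Xi k * zpow X Xi (i+1) = (zpow X Xi k * zpow X Xi i) * X" by (simp add: mult.assoc)
  also have "\<dots> = zpow X Xi (k + (i+1))" using step1 zpow_up[OF assms, of "k+i"] by (simp add: add.assoc)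
  finally show ?case .
next
  case (step2 i)
  have "zpow X Xi (i-1) = zpow X Xi i * Xi" using zpow_down[OF assms] by simp
  then have "zpow X Xi k * zpow X Xi (i-1) = (zpow X Xi k * zpow X Xi i) * Xi" by (simp add: mult.assoc)
  also have "\<dots> = zpow X Xi (k + (i-1))" using step2 zpow_down[OF assms, of "k+i"] by (simp add: algebra_simps)
  finally show ?case .
qed

lemma power_comm_shift:
  fixes X w X' :: "'a::ring_1"
  assumes "X * w = w * X'"
  shows "X ^ n * w = w * X' ^ n"
proof (induction n)
  case 0 then show ?case by simp
next
  case (Suc n)
  have "X ^ Suc n * w = X * (X ^ n * w)" by (simp add: mult.assoc)
  also have "\<dots> = (X * w) * X' ^ n" using Suc by (simp add: mult.assoc)
  also have "\<dots> = w * X' ^ Suc n" using assms by (simp add: mult.assoc)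
  finally show ?case .
qed

lemma zpow_comm_shift:
  fixes X Xi w X' Xi' :: "'a::ring_1"
  assumes "X * w = w * X'" "Xi * w = w * Xi'"
  shows "zpow X Xi k * w = w * zpow X' Xi' k"
  using power_comm_shift[OF assms(1)] power_comm_shift[OF assms(2)] by (simp add: zpow_def)

lemma powi_ne_1:
  fixes x :: real assumes "0 < x" "x < 1" "n \<noteq> 0"
  shows "x powi n \<noteq> 1"
proof (cases "0 < n")
  case True
  then have "x ^ nat n < 1" using assms by (simp add: power_less_one_iff)
  then show ?thesis using True by (simp add: power_int_def)
next
  case False
  then have "n < 0" using assms by simp
  moreover have "1 < inverse x" using assms by (simp add: one_less_inverse)
  ultimately have "1 < inverse x ^ nat (-n)" by (simp add: one_less_power)
  then show ?thesis using \<open>n < 0\<close> by (simp add: power_int_def)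
qed



lemma cpos_sum:
  assumes "finite D" "\<forall>d\<in>D. f d = 0 \<or> cpos (f d)" "d0 \<in> D" "cpos (f d0)"
  shows "cpos (sum f D)"
proof -
  have R: "\<forall>d\<in>D. f d \<in> \<real>" using assms(2) by (auto simp: cpos_def)
  then have "sum f D \<in> \<real>" by (simp add: sum_in_Reals)
  moreover have "Re (f d0) \<le> (\<Sum>d\<in>D. Re (f d))"
    by (rule member_le_sum) (use assms in \<open>auto simp: cpos_def\<close>)
  then have "0 < Re (sum f D)" using assms(4) by (simp add: cpos_def Re_sum)
  ultimately show ?thesis by (simp add: cpos_def)
qed

locale gwa =
  fixes q :: real and p :: "int \<Rightarrow> complex" and emb :: "complex \<Rightarrow> 'a::ring_1"
    and u v Z Zi :: 'a
  assumes q0: "0 < q" and q1: "q < 1" and pfin: "finite {k. p k \<noteq> 0}"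
    and A: "is_A_P q p emb u v Z Zi"
begin

abbreviation "M i k \<equiv> gwa_mon u v Z Zi i k"
abbreviation "AD d \<equiv> Adeg q emb Z Zi d"
abbreviation "zp k \<equiv> zpow Z Zi k"

lemma emb_add: "emb (x + y) = emb x + emb y" using A unfolding is_A_P_def by blast
lemma emb_mult: "emb (x * y) = emb x * emb y" using A unfolding is_A_P_def by blast
lemma emb_1[simp]: "emb 1 = 1" using A unfolding is_A_P_def by blast
lemma emb_comm: "emb x * a = a * emb x" using A unfolding is_A_P_def by blast
lemma ZZi[simp]: "Z * Zi = 1" using A unfolding is_A_P_def by blast
lemma ZiZ[simp]: "Zi * Z = 1" using A unfolding is_A_P_def by blast
lemma Zu: "Z * u * Zi = emb (complex_of_real (q ^ 2)) * u" using A unfolding is_A_P_def by blast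
lemma Zv: "Z * v * Zi = emb (complex_of_real (inverse q ^ 2)) * v" using A unfolding is_A_P_def by blast
lemma uv: "u * v = lp emb p (emb (complex_of_real (inverse q)) * Z) (emb (complex_of_real q) * Zi)"
  using A unfolding is_A_P_def by blast
lemma vu: "v * u = lp emb p (emb (complex_of_real q) * Z) (emb (complex_of_real (inverse q)) * Zi)"
  using A unfolding is_A_P_def by blast
lemma span: "\<exists>cf. finite {pk. cf pk \<noteq> 0} \<and>
        a = (\<Sum>pk\<in>{pk. cf pk \<noteq> 0}. emb (cf pk) * M (fst pk) (snd pk))"
  using A unfolding is_A_P_def by blast
lemma indep0: "finite {pk. cf pk \<noteq> 0} \<Longrightarrow>
        (\<Sum>pk\<in>{pk. cf pk \<noteq> 0}. emb (cf pk) * M (fst pk) (snd pk)) = 0 \<Longrightarrow> cf pk = 0"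
  using A unfolding is_A_P_def by blast

lemma emb_0[simp]: "emb 0 = 0"
  using emb_add[of 0 0] by simp
lemma emb_uminus: "emb (- x) = - emb x"
  using emb_add[of x "-x"] by (simp add: eq_neg_iff_add_eq_0 add.commute)
lemma emb_diff: "emb (x - y) = emb x - emb y"
  using emb_add[of x "-y"] emb_uminus by simp
lemma emb_sum: "emb (sum f S) = (\<Sum>x\<in>S. emb (f x))"
  by (induction S rule: infinite_finite_induct) (auto simp: emb_add)

lemma emb_lc: "a * (emb x * b) = emb x * (a * b)"
  by (metis mult.assoc emb_comm)
lemma emb_emb[simp]: "emb x * (emb y * b) = emb (x * y) * b"
  by (simp add: emb_mult mult.assoc)
lemma emb_emb2[simp]: "emb x * emb y = emb (x * y)"
  by (simp add: emb_mult)
lemma emb_rc: "a * emb x * b = emb x * (a * b)"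
  by (metis mult.assoc emb_comm)

lemma emb_inv: "x \<noteq> 0 \<Longrightarrow> emb x * emb (inverse x) = 1"
  by (simp)

lemma indep: assumes "finite S" "(\<Sum>pk\<in>S. emb (c pk) * M (fst pk) (snd pk)) = 0" "pk \<in> S"
  shows "c pk = 0"
proof -
  define cf where "cf pk = (if pk \<in> S then c pk else 0)" for pk
  have sub: "{pk. cf pk \<noteq> 0} \<subseteq> S" by (auto simp: cf_def split: if_splits)
  have fin: "finite {pk. cf pk \<noteq> 0}" using sub assms(1) finite_subset by blast
  have "(\<Sum>pk\<in>{pk. cf pk \<noteq> 0}. emb (cf pk) * M (fst pk) (snd pk))
      = (\<Sum>pk\<in>S. emb (cf pk) * M (fst pk) (snd pk))"
    by (rule sum.mono_neutral_left[OF assms(1) sub]) auto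
  also have "\<dots> = 0" using assms(2) by (simp add: cf_def)
  finally have "cf pk = 0" using indep0[OF fin] by blast
  then show ?thesis using assms(3) by (simp add: cf_def)
qed

lemma span': obtains S c where "finite S" "a = (\<Sum>pk\<in>S. emb (c pk) * M (fst pk) (snd pk))"
  using span[of a] by blast

lemma Zu': "Z * u = emb (complex_of_real (q ^ 2)) * u * Z"
proof -
  have "Z * u = Z * u * Zi * Z" by (simp add: mult.assoc)
  then show ?thesis using Zu by simp
qed
lemma Zv': "Z * v = emb (complex_of_real (inverse q ^ 2)) * v * Z"
proof -
  have "Z * v = Z * v * Zi * Z" by (simp add: mult.assoc)
  then show ?thesis using Zv by simp
qed
lemmas emb_lcs = emb_lc[of u] emb_lc[of v] emb_lc[of Z] emb_lc[of Zi]

lemma Zu2: "Z * u = u * (emb (complex_of_real (q ^ 2)) * Z)"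
  using Zu' by (simp add: emb_lcs mult.assoc)
lemma Zv2: "Z * v = v * (emb (complex_of_real (inverse q ^ 2)) * Z)"
  using Zv' by (simp add: emb_lcs mult.assoc)
lemma Ziu2: "Zi * u = u * (emb (complex_of_real (inverse q ^ 2)) * Zi)"
proof -
  have "u * Zi = Zi * (Z * u) * Zi" by (simp flip: mult.assoc)
  also have "\<dots> = emb (complex_of_real (q ^ 2)) * (Zi * u)"
    by (simp add: Zu' emb_lcs mult.assoc)
  finally have e: "u * Zi = emb (complex_of_real (q ^ 2)) * (Zi * u)" .
  have "Zi * u = emb (complex_of_real (inverse q ^ 2)) * (emb (complex_of_real (q ^ 2)) * (Zi * u))"
    using q0 by (simp add: power_inverse)
  also have "\<dots> = emb (complex_of_real (inverse q ^ 2)) * (u * Zi)" using e by simp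
  finally show ?thesis by (simp add: emb_lcs)
qed
lemma Ziv2: "Zi * v = v * (emb (complex_of_real (q ^ 2)) * Zi)"
proof -
  have "v * Zi = Zi * (Z * v) * Zi" by (simp flip: mult.assoc)
  also have "\<dots> = emb (complex_of_real (inverse q ^ 2)) * (Zi * v)"
    by (simp add: Zv' emb_lcs mult.assoc)
  finally have e: "v * Zi = emb (complex_of_real (inverse q ^ 2)) * (Zi * v)" .
  have "Zi * v = emb (complex_of_real (q ^ 2)) * (emb (complex_of_real (inverse q ^ 2)) * (Zi * v))"
    using q0 by (simp add: power_inverse)
  also have "\<dots> = emb (complex_of_real (q ^ 2)) * (v * Zi)" using e by simp
  finally show ?thesis by (simp add: emb_lcs)
qed

lemma emb_pow: "(emb a * X) ^ n = emb (a ^ n) * X ^ n"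
  by (induction n) (simp_all add: emb_lc[of X] mult.assoc)

lemma zpow_scale:
  assumes "a \<noteq> 0"
  shows "zpow (emb a * X) (emb (inverse a) * Xi) k = emb (a powi k) * zpow X Xi k"
  by (simp add: zpow_def emb_pow power_int_def)

lemma zpow_mult: "zp k * zp l = zp (k + l)"
  by (rule zpow_add) simp_all

lemma emb_pow2: "emb a ^ n = emb (a ^ n)"
  by (induction n) simp_all


definition ee :: "int \<Rightarrow> complex" where "ee d = complex_of_real q powi (2 * d)"

lemma ee_add: "ee (i + j) = ee i * ee j"
  using q0 by (simp add: ee_def distrib_left power_int_add)
lemma ee_0[simp]: "ee 0 = 1" by (simp add: ee_def)
lemma ee_real: "ee d = complex_of_real (q powi (2*d))" by (simp add: ee_def)
lemma ee_nz: "ee d \<noteq> 0" using q0 by (simp add: ee_def)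
lemma ee_inj: assumes "ee i = ee d" shows "i = d"
proof (rule ccontr)
  assume "i \<noteq> d"
  then have "q powi (2*i - 2*d) \<noteq> 1" using powi_ne_1[OF q0 q1] by simp
  moreover have "q powi (2*i) = q powi (2*d)" using assms by (metis ee_real of_real_eq_iff)
  ultimately show False using q0 by (simp add: power_int_diff)
qed
lemma ee_ne1: "d \<noteq> 0 \<Longrightarrow> ee d \<noteq> 1" using ee_inj[of d 0] by auto

lemma AD_iff: "x \<in> AD d \<longleftrightarrow> Z * x * Zi = emb (ee d) * x"
  by (simp add: Adeg_def ee_def)
lemma AD_0: "0 \<in> AD d" by (simp add: AD_iff)
lemma AD_add: "x \<in> AD d \<Longrightarrow> y \<in> AD d \<Longrightarrow> x + y \<in> AD d"
  by (simp add: AD_iff distrib_left distrib_right emb_add)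
lemma AD_emb: "x \<in> AD d \<Longrightarrow> emb a * x \<in> AD d"
proof -
  assume "x \<in> AD d"
  then have "Z * (x * Zi) = emb (ee d) * x" by (simp add: AD_iff mult.assoc)
  then show ?thesis by (simp add: AD_iff mult.assoc emb_lcs mult.commute)
qed
lemma AD_mult: assumes "x \<in> AD i" "y \<in> AD j" shows "x * y \<in> AD (i + j)"
proof -
  have "Z * (x * y) * Zi = (Z * x * Zi) * (Z * y * Zi)"
    by (simp add: mult.assoc flip: mult.assoc[of Zi Z])
  also have "\<dots> = emb (ee i) * x * (emb (ee j) * y)" using assms by (simp add: AD_iff)
  also have "\<dots> = emb (ee (i+j)) * (x * y)" by (simp add: emb_lc[of x] mult.assoc ee_add)
  finally show ?thesis by (simp add: AD_iff mult.assoc)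
qed
lemma AD_sum: "(\<And>i. i \<in> S \<Longrightarrow> f i \<in> AD d) \<Longrightarrow> sum f S \<in> AD d"
  by (induction S rule: infinite_finite_induct) (auto simp: AD_0 AD_add)
lemma AD_pow: "x \<in> AD d \<Longrightarrow> x ^ n \<in> AD (int n * d)"
proof (induction n)
  case 0 then show ?case by (simp add: AD_iff)
next
  case (Suc n)
  then have "x * x ^ n \<in> AD (d + int n * d)" by (intro AD_mult) auto
  then show ?case by (simp add: algebra_simps)
qed
lemma u_AD: "u \<in> AD 1" using Zu by (simp add: AD_iff ee_def)
lemma v_AD: "v \<in> AD (-1)" using Zv by (simp add: AD_iff ee_def power_inverse power_int_def)
lemma Z_AD: "Z \<in> AD 0" by (simp add: AD_iff mult.assoc)
lemma Zi_AD: "Zi \<in> AD 0" by (simp add: AD_iff flip: mult.assoc)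
lemma zp_AD: "zp k \<in> AD 0"
  using AD_pow[OF Z_AD] AD_pow[OF Zi_AD] by (simp add: zpow_def)
lemma upow_AD: "u ^ n \<in> AD (int n)" using AD_pow[OF u_AD, of n] by simp
lemma vpow_AD: "v ^ n \<in> AD (- int n)" using AD_pow[OF v_AD, of n] by simp
lemma M_pos: "M (int n) k = u ^ n * zp k" by (simp add: gwa_mon_def)
lemma M_neg: "M (- int n) k = v ^ n * zp k" by (cases n) (simp_all add: gwa_mon_def nat_add_distrib)
lemma M_AD: "M i k \<in> AD i"
proof (cases "0 \<le> i")
  case True
  then obtain n where "i = int n" using nonneg_eq_int by blast
  then show ?thesis using AD_mult[OF upow_AD zp_AD] by (simp add: M_pos)
next
  case False
  then obtain n where "i = - int n" by (metis minus_minus nonneg_eq_int neg_0_le_iff_le nle_le)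
  then show ?thesis using AD_mult[OF vpow_AD zp_AD] by (simp add: M_neg)
qed


lemma ZM: "Z * M i k * Zi = emb (ee i) * M i k"
  using M_AD by (simp add: AD_iff)

lemma Z_sum_Zi: "Z * (\<Sum>pk\<in>S. emb (c pk) * M (fst pk) (snd pk)) * Zi
   = (\<Sum>pk\<in>S. emb (c pk * ee (fst pk)) * M (fst pk) (snd pk))"
proof -
  have "Z * (\<Sum>pk\<in>S. emb (c pk) * M (fst pk) (snd pk)) * Zi
      = (\<Sum>pk\<in>S. Z * (emb (c pk) * M (fst pk) (snd pk)) * Zi)"
    by (simp add: sum_distrib_left sum_distrib_right)
  also have "\<dots> = (\<Sum>pk\<in>S. emb (c pk * ee (fst pk)) * M (fst pk) (snd pk))"
  proof (rule sum.cong[OF refl])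
    fix pk
    have "Z * (emb (c pk) * M (fst pk) (snd pk)) * Zi = emb (c pk) * (Z * M (fst pk) (snd pk) * Zi)"
      by (simp add: emb_lcs mult.assoc)
    also have "\<dots> = emb (c pk * ee (fst pk)) * M (fst pk) (snd pk)" by (simp add: ZM)
    finally show "Z * (emb (c pk) * M (fst pk) (snd pk)) * Zi = emb (c pk * ee (fst pk)) * M (fst pk) (snd pk)" .
  qed
  finally show ?thesis .
qed

lemma rep:
  assumes "x \<in> AD d"
  obtains K r where "finite K" "\<forall>k\<in>K. r k \<noteq> 0" "x = (\<Sum>k\<in>K. emb (r k) * M d k)"
proof -
  obtain S c where fS: "finite S" and x: "x = (\<Sum>pk\<in>S. emb (c pk) * M (fst pk) (snd pk))"
    using span' by blast
  have "Z * x * Zi = emb (ee d) * x" using assms by (simp add: AD_iff)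
  then have "(\<Sum>pk\<in>S. emb (c pk * ee (fst pk)) * M (fst pk) (snd pk))
      = (\<Sum>pk\<in>S. emb (ee d * c pk) * M (fst pk) (snd pk))"
    unfolding x Z_sum_Zi by (simp add: sum_distrib_left)
  then have "(\<Sum>pk\<in>S. emb (c pk * ee (fst pk)) * M (fst pk) (snd pk))
      - (\<Sum>pk\<in>S. emb (ee d * c pk) * M (fst pk) (snd pk)) = 0" by simp
  then have "(\<Sum>pk\<in>S. emb (c pk * ee (fst pk)) * M (fst pk) (snd pk)
      - emb (ee d * c pk) * M (fst pk) (snd pk)) = 0" by (simp only: sum_subtractf)
  moreover have "\<And>pk. emb (c pk * ee (fst pk)) * M (fst pk) (snd pk)
      - emb (ee d * c pk) * M (fst pk) (snd pk) = emb (c pk * (ee (fst pk) - ee d)) * M (fst pk) (snd pk)"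
    by (simp add: right_diff_distrib emb_diff left_diff_distrib mult.commute[of "ee d"])
  ultimately have "(\<Sum>pk\<in>S. emb (c pk * (ee (fst pk) - ee d)) * M (fst pk) (snd pk)) = 0"
    by simp
  then have c0: "\<And>pk. pk \<in> S \<Longrightarrow> c pk * (ee (fst pk) - ee d) = 0"
    using indep[OF fS, where c="\<lambda>pk. c pk * (ee (fst pk) - ee d)"] by blast
  define S' where "S' = {pk \<in> S. c pk \<noteq> 0}"
  have fst_d: "\<And>pk. pk \<in> S' \<Longrightarrow> fst pk = d"
  proof -
    fix pk assume "pk \<in> S'"
    then have "pk \<in> S" "c pk \<noteq> 0" by (auto simp: S'_def)
    then have "ee (fst pk) = ee d" using c0[of pk] by simp
    then show "fst pk = d" by (rule ee_inj)
  qed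
  have fS': "finite S'" using fS by (simp add: S'_def)
  have xS': "x = (\<Sum>pk\<in>S'. emb (c pk) * M (fst pk) (snd pk))"
    unfolding x by (rule sum.mono_neutral_right[OF fS]) (auto simp: S'_def)
  define K where "K = snd ` S'"
  have S'K: "S' = (\<lambda>k. (d, k)) ` K"
  proof -
    have "(\<lambda>k. (d, k)) ` K = (\<lambda>pk. (d, snd pk)) ` S'" by (simp add: K_def image_image)
    also have "\<dots> = (\<lambda>pk. pk) ` S'"
      by (rule image_cong[OF refl]) (simp add: prod_eq_iff fst_d)
    finally show ?thesis by simp
  qed
  have "(\<Sum>pk\<in>S'. emb (c pk) * M (fst pk) (snd pk)) = (\<Sum>k\<in>K. emb (c (d, k)) * M d k)"
    unfolding S'K by (subst sum.reindex) (auto simp: inj_on_def)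
  then have X1: "x = (\<Sum>k\<in>K. emb (c (d, k)) * M d k)" using xS' by simp
  have X2: "finite K" using fS' by (simp add: K_def)
  have X3: "\<forall>k\<in>K. c (d, k) \<noteq> 0"
  proof
    fix k assume "k \<in> K"
    then have "(d, k) \<in> S'" unfolding S'K by blast
    then show "c (d, k) \<noteq> 0" by (simp add: S'_def)
  qed
  show ?thesis by (rule that[OF X2 X3 X1])
qed

lemma collect:
  assumes "finite J"
  shows "(\<Sum>j\<in>J. emb (a j) * M (fst (f j)) (snd (f j)))
    = (\<Sum>pk\<in>f ` J. emb (\<Sum>j\<in>{j\<in>J. f j = pk}. a j) * M (fst pk) (snd pk))"
proof -
  have "(\<Sum>j\<in>J. emb (a j) * M (fst (f j)) (snd (f j)))
     = (\<Sum>pk\<in>f ` J. \<Sum>j\<in>{j\<in>J. f j = pk}. emb (a j) * M (fst (f j)) (snd (f j)))"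
    by (rule sum.group[symmetric]) (use assms in auto)
  also have "\<dots> = (\<Sum>pk\<in>f ` J. emb (\<Sum>j\<in>{j\<in>J. f j = pk}. a j) * M (fst pk) (snd pk))"
    by (rule sum.cong[OF refl]) (simp add: emb_sum sum_distrib_right)
  finally show ?thesis .
qed

lemma nz_gen:
  assumes "finite J" "j0 \<in> J" "\<forall>j\<in>J. f j = f j0 \<longrightarrow> j = j0" "a j0 \<noteq> 0"
  shows "(\<Sum>j\<in>J. emb (a j) * M (fst (f j)) (snd (f j))) \<noteq> 0"
proof
  assume h: "(\<Sum>j\<in>J. emb (a j) * M (fst (f j)) (snd (f j))) = 0"
  have "(\<Sum>j\<in>{j\<in>J. f j = f j0}. a j) = 0"
    using indep[of "f ` J" "\<lambda>pk. \<Sum>j\<in>{j\<in>J. f j = pk}. a j" "f j0"] h collect[OF assms(1)] assms(1,2)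
    by auto
  moreover have "{j\<in>J. f j = f j0} = {j0}" using assms(2,3) by auto
  ultimately show False using assms(4) by simp
qed


lemma nz_single:
  assumes "finite K" "K \<noteq> {}" "\<forall>k\<in>K. r k \<noteq> 0"
  shows "(\<Sum>k\<in>K. emb (r k) * M i k) \<noteq> 0"
proof -
  obtain k0 where "k0 \<in> K" using assms(2) by blast
  then show ?thesis
    using nz_gen[of K k0 "\<lambda>k. (i, k)" r] assms by auto
qed

lemma nz_prod:
  assumes "finite J" "finite K" "J \<noteq> {}" "K \<noteq> {}" "\<forall>j\<in>J. a j \<noteq> 0" "\<forall>k\<in>K. b k \<noteq> 0"
  shows "(\<Sum>jk\<in>J \<times> K. emb (a (fst jk) * b (snd jk)) * M i (fst jk + snd jk)) \<noteq> 0"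
proof -
  let ?j0 = "(Max J, Max K)"
  have j0: "?j0 \<in> J \<times> K" using assms by simp
  have uniq: "\<forall>jk\<in>J \<times> K. (i, fst jk + snd jk) = (i, fst ?j0 + snd ?j0) \<longrightarrow> jk = ?j0"
  proof (intro ballI impI)
    fix jk assume jk: "jk \<in> J \<times> K" and e: "(i, fst jk + snd jk) = (i, fst ?j0 + snd ?j0)"
    have "fst jk \<le> Max J" "snd jk \<le> Max K" using jk assms by auto
    with e show "jk = ?j0" by (auto simp: prod_eq_iff)
  qed
  show ?thesis
    using nz_gen[OF _ j0 uniq, of "\<lambda>jk. a (fst jk) * b (snd jk)"] assms by simp
qed


lemma emb_lc_upow: "u ^ n * (emb x * b) = emb x * (u ^ n * b)" by (rule emb_lc)
lemma emb_lc_vpow: "v ^ n * (emb x * b) = emb x * (v ^ n * b)" by (rule emb_lc)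
lemma emb_lc_zp: "zp k * (emb x * b) = emb x * (zp k * b)" by (rule emb_lc)
lemmas emb_lcs2 = emb_lcs emb_lc_upow emb_lc_vpow emb_lc_zp

lemma zp_v: "zp k * v = emb (complex_of_real (inverse q ^ 2) powi k) * (v * zp k)"
proof -
  let ?b = "complex_of_real (inverse q ^ 2)"
  have nz: "?b \<noteq> 0" using q0 by simp
  have "zp k * v = v * zpow (emb ?b * Z) (emb (inverse ?b) * Zi) k"
    by (rule zpow_comm_shift) (use Zv2 Ziv2 q0 in \<open>simp_all add: power_inverse\<close>)
  also have "\<dots> = emb (?b powi k) * (v * zp k)" by (subst zpow_scale[OF nz]) (simp only: emb_lcs)
  finally show ?thesis .
qed

lemma zp_u: "zp k * u = emb (complex_of_real (q ^ 2) powi k) * (u * zp k)"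
proof -
  let ?b = "complex_of_real (q ^ 2)"
  have nz: "?b \<noteq> 0" using q0 by simp
  have "zp k * u = u * zpow (emb ?b * Z) (emb (inverse ?b) * Zi) k"
    by (rule zpow_comm_shift) (use Zu2 Ziu2 q0 in \<open>simp_all add: power_inverse\<close>)
  also have "\<dots> = emb (?b powi k) * (u * zp k)" by (subst zpow_scale[OF nz]) (simp only: emb_lcs)
  finally show ?thesis .
qed

lemma lp_scale:
  assumes "a \<noteq> 0"
  shows "lp emb r (emb a * Z) (emb (inverse a) * Zi) = (\<Sum>k\<in>{k. r k \<noteq> 0}. emb (r k * a powi k) * zp k)"
  unfolding lp_def by (rule sum.cong[OF refl]) (simp add: zpow_scale[OF assms])

lemma lpZ: "lp emb r Z Zi = (\<Sum>k\<in>{k. r k \<noteq> 0}. emb (r k) * zp k)"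
  by (simp add: lp_def)

lemma uv_sum: "u * v = (\<Sum>j\<in>{j. p j \<noteq> 0}. emb (p j * complex_of_real (inverse q) powi j) * zp j)"
proof -
  have "u * v = lp emb p (emb (complex_of_real (inverse q)) * Z) (emb (inverse (complex_of_real (inverse q))) * Zi)"
    using uv q0 by simp
  also have "\<dots> = (\<Sum>j\<in>{j. p j \<noteq> 0}. emb (p j * complex_of_real (inverse q) powi j) * zp j)"
    by (rule lp_scale) (use q0 in simp)
  finally show ?thesis .
qed

lemma vu_sum: "v * u = (\<Sum>j\<in>{j. p j \<noteq> 0}. emb (p j * complex_of_real q powi j) * zp j)"
proof -
  have "v * u = lp emb p (emb (complex_of_real q) * Z) (emb (inverse (complex_of_real q)) * Zi)"
    using vu q0 by simp
  also have "\<dots> = (\<Sum>j\<in>{j. p j \<noteq> 0}. emb (p j * complex_of_real q powi j) * zp j)"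
    by (rule lp_scale) (use q0 in simp)
  finally show ?thesis .
qed

lemma lp_comm:
  assumes "X * w = w * X'" "Xi * w = w * Xi'"
  shows "lp emb r X Xi * w = w * lp emb r X' Xi'"
  unfolding lp_def sum_distrib_right sum_distrib_left
proof (rule sum.cong[OF refl])
  fix k
  have "emb (r k) * zpow X Xi k * w = emb (r k) * (zpow X Xi k * w)" by (simp add: mult.assoc)
  also have "\<dots> = emb (r k) * (w * zpow X' Xi' k)" using zpow_comm_shift[OF assms] by simp
  also have "\<dots> = w * (emb (r k) * zpow X' Xi' k)" by (rule emb_lc[symmetric])
  finally show "emb (r k) * zpow X Xi k * w = w * (emb (r k) * zpow X' Xi' k)" .
qed


lemma M_zp_mult: "emb a * (X * zp j) * zp k = emb a * (X * zp (j + k))"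
  by (simp add: mult.assoc zpow_mult)

lemma sum_left: "X * (\<Sum>j\<in>J. emb (a j) * zp j) * zp k = (\<Sum>j\<in>J. emb (a j) * (X * zp (j + k)))"
proof -
  have "X * (\<Sum>j\<in>J. emb (a j) * zp j) * zp k = (\<Sum>j\<in>J. X * (emb (a j) * zp j) * zp k)"
    by (simp add: sum_distrib_left sum_distrib_right)
  also have "\<dots> = (\<Sum>j\<in>J. emb (a j) * (X * zp (j + k)))"
    by (rule sum.cong[OF refl]) (simp add: emb_lc[of X] M_zp_mult)
  finally show ?thesis .
qed

lemma AD_sumM: "(\<Sum>jk\<in>S. emb (a jk) * M i (f jk)) \<in> AD i"
  by (rule AD_sum) (rule AD_emb[OF M_AD])

lemma red_pos_alg:
  assumes x: "x \<in> AD (int (Suc (Suc m)))" and nz: "x \<noteq> 0" and J: "{j. p j \<noteq> 0} \<noteq> {}"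
  obtains b where "x = u * b" "b * v \<in> AD (int m)" "b * v \<noteq> 0"
proof -
  obtain K r where fK: "finite K" and rK: "\<forall>k\<in>K. r k \<noteq> 0" and xe: "x = (\<Sum>k\<in>K. emb (r k) * M (int (Suc (Suc m))) k)"
    using rep[OF x] by blast
  have Kne: "K \<noteq> {}" using nz xe by auto
  define b where "b = (\<Sum>k\<in>K. emb (r k) * (u ^ Suc m * zp k))"
  have xb: "x = u * b"
    unfolding xe b_def M_pos sum_distrib_left
    by (rule sum.cong[OF refl]) (simp add: emb_lcs mult.assoc)
  let ?J = "{j. p j \<noteq> 0}"
  define aj where "aj j = p j * complex_of_real (inverse q) powi j" for j
  define bk where "bk k = r k * complex_of_real (inverse q ^ 2) powi k" for k
  have trm: "emb (r k) * (u ^ Suc m * zp k) * v = (\<Sum>j\<in>?J. emb (aj j * bk k) * M (int m) (j + k))" for k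
  proof -
    have "emb (r k) * (u ^ Suc m * zp k) * v = emb (r k) * (u ^ Suc m * (zp k * v))"
      by (simp add: mult.assoc)
    also have "\<dots> = emb (bk k) * (u ^ m * (u * v) * zp k)"
      by (simp only: zp_v power_Suc2 mult.assoc emb_lcs2 emb_emb bk_def)
    also have "\<dots> = emb (bk k) * (\<Sum>j\<in>?J. emb (aj j) * (u ^ m * zp (j + k)))"
      unfolding uv_sum sum_left aj_def ..
    also have "\<dots> = (\<Sum>j\<in>?J. emb (aj j * bk k) * M (int m) (j + k))"
      by (simp add: sum_distrib_left M_pos mult.commute)
    finally show ?thesis .
  qed
  have "b * v = (\<Sum>k\<in>K. \<Sum>j\<in>?J. emb (aj j * bk k) * M (int m) (j + k))"
    unfolding b_def sum_distrib_right using trm by simp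
  also have "\<dots> = (\<Sum>j\<in>?J. \<Sum>k\<in>K. emb (aj j * bk k) * M (int m) (j + k))"
    by (rule sum.swap)
  also have "\<dots> = (\<Sum>jk\<in>?J \<times> K. emb (aj (fst jk) * bk (snd jk)) * M (int m) (fst jk + snd jk))"
    by (simp add: sum.cartesian_product case_prod_beta)
  finally have bv: "b * v = \<dots>" .
  have "b * v \<in> AD (int m)" unfolding bv by (rule AD_sumM)
  moreover have "b * v \<noteq> 0" unfolding bv
    by (rule nz_prod) (use pfin fK J Kne rK q0 in \<open>auto simp: aj_def bk_def\<close>)
  ultimately show ?thesis using xb that by blast
qed


lemma red_neg_alg:
  assumes x: "x \<in> AD (- int (Suc n))" and nz: "x \<noteq> 0" and J: "{j. p j \<noteq> 0} \<noteq> {}"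
  obtains b where "x = v * b" "b * u \<in> AD (- int n + 1)" "b * u \<noteq> 0"
proof -
  obtain K r where fK: "finite K" and rK: "\<forall>k\<in>K. r k \<noteq> 0" and xe: "x = (\<Sum>k\<in>K. emb (r k) * M (- int (Suc n)) k)"
    using rep[OF x] by blast
  have Kne: "K \<noteq> {}" using nz xe by auto
  define b where "b = (\<Sum>k\<in>K. emb (r k) * (v ^ n * zp k))"
  have xb: "x = v * b"
    unfolding xe b_def M_neg sum_distrib_left
    by (rule sum.cong[OF refl]) (simp add: emb_lcs mult.assoc)
  define bk where "bk k = r k * complex_of_real (q ^ 2) powi k" for k
  have bu0: "b * u = (\<Sum>k\<in>K. emb (bk k) * (v ^ n * u * zp k))"
    unfolding b_def sum_distrib_right
  proof (rule sum.cong[OF refl])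
    fix k
    show "emb (r k) * (v ^ n * zp k) * u = emb (bk k) * (v ^ n * u * zp k)"
      by (simp only: zp_u mult.assoc emb_lcs2 emb_emb bk_def)
  qed
  have "b * u \<in> AD (- int n + 1) \<and> b * u \<noteq> 0"
  proof (cases n)
    case 0
    have bu: "b * u = (\<Sum>k\<in>K. emb (bk k) * M 1 k)"
      unfolding bu0 using 0 by (simp add: gwa_mon_def)
    show ?thesis unfolding bu 0
      using AD_sumM[of "\<lambda>k. bk k" 1 "\<lambda>k. k" K] nz_single[of K bk 1] fK Kne rK q0
      by (auto simp: bk_def)
  next
    case (Suc m)
    let ?J = "{j. p j \<noteq> 0}"
    define aj where "aj j = p j * complex_of_real q powi j" for j
    have trm: "emb (bk k) * (v ^ n * u * zp k) = (\<Sum>j\<in>?J. emb (aj j * bk k) * M (- int m) (j + k))" for k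
    proof -
      have "emb (bk k) * (v ^ n * u * zp k) = emb (bk k) * (v ^ m * (v * u) * zp k)"
        by (simp only: Suc power_Suc2 mult.assoc)
      also have "\<dots> = emb (bk k) * (\<Sum>j\<in>?J. emb (aj j) * (v ^ m * zp (j + k)))"
        unfolding vu_sum sum_left aj_def ..
      also have "\<dots> = (\<Sum>j\<in>?J. emb (aj j * bk k) * M (- int m) (j + k))"
        by (simp add: sum_distrib_left M_neg mult.commute)
      finally show ?thesis .
    qed
    have "b * u = (\<Sum>k\<in>K. \<Sum>j\<in>?J. emb (aj j * bk k) * M (- int m) (j + k))"
      unfolding bu0 using trm by simp
    also have "\<dots> = (\<Sum>j\<in>?J. \<Sum>k\<in>K. emb (aj j * bk k) * M (- int m) (j + k))"
      by (rule sum.swap)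
    also have "\<dots> = (\<Sum>jk\<in>?J \<times> K. emb (aj (fst jk) * bk (snd jk)) * M (- int m) (fst jk + snd jk))"
      by (simp add: sum.cartesian_product case_prod_beta)
    finally have bv: "b * u = \<dots>" .
    have "b * u \<in> AD (- int m)" unfolding bv by (rule AD_sumM)
    moreover have "b * u \<noteq> 0" unfolding bv
      by (rule nz_prod) (use pfin fK J Kne rK q0 in \<open>auto simp: aj_def bk_def\<close>)
    ultimately show ?thesis using Suc by simp
  qed
  then show ?thesis using xb that by blast
qed

end

locale gwa2 = gwa q p emb u v Z Zi
  for q :: real and p :: "int \<Rightarrow> complex" and emb :: "complex \<Rightarrow> 'a::ring_1"
    and u v Z Zi :: 'a +
  fixes c :: real and g \<rho> :: "'a \<Rightarrow> 'a" and T :: "'a \<Rightarrow> complex"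
  assumes g: "is_g emb u v Z Zi (exp (2 * complex_of_real pi * \<i> * complex_of_real c)) g"
    and rho: "is_rho emb u v Z Zi c \<rho>"
    and T: "twisted_trace emb g T"
begin

abbreviation "tt \<equiv> exp (2 * complex_of_real pi * \<i> * complex_of_real c)"
abbreviation "al \<equiv> exp (- (complex_of_real pi * \<i> * complex_of_real c))"
abbreviation "be \<equiv> exp (complex_of_real pi * \<i> * complex_of_real c)"

lemma T_add: "T (a + b) = T a + T b" using T unfolding twisted_trace_def by blast
lemma T_emb: "T (emb x * a) = x * T a" using T unfolding twisted_trace_def by blast
lemma T_tw: "T (a * b) = T (b * g a)" using T unfolding twisted_trace_def by blast
lemma T_0[simp]: "T 0 = 0" using T_emb[of 0 0] by simp
lemma T_sum: "T (sum f S) = (\<Sum>x\<in>S. T (f x))"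
  by (induction S rule: infinite_finite_induct) (auto simp: T_add)

lemma g_mult: "g (a * b) = g a * g b" using g unfolding is_g_def by blast
lemma g_u: "g u = emb tt * u" using g unfolding is_g_def by blast
lemma g_v: "g v = emb (inverse tt) * v" using g unfolding is_g_def by blast
lemma g_Z: "g Z = Z" using g unfolding is_g_def by blast
lemma g_Zi: "g Zi = Zi" using g unfolding is_g_def by blast

lemma rho_add: "\<rho> (a + b) = \<rho> a + \<rho> b" using rho unfolding is_rho_def by blast
lemma rho_mult: "\<rho> (a * b) = \<rho> a * \<rho> b" using rho unfolding is_rho_def by blast
lemma rho_emb: "\<rho> (emb x * a) = emb (cnj x) * \<rho> a" using rho unfolding is_rho_def by blast
lemma rho_u: "\<rho> u = emb al * v" using rho unfolding is_rho_def by blast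
lemma rho_v: "\<rho> v = emb be * u" using rho unfolding is_rho_def by blast
lemma rho_Z: "\<rho> Z = Zi" using rho unfolding is_rho_def by blast
lemma rho_Zi: "\<rho> Zi = Z" using rho unfolding is_rho_def by blast
lemma rho_0[simp]: "\<rho> 0 = 0" using rho_add[of 0 0] by simp
lemma rho_1[simp]: "\<rho> 1 = 1" using rho_mult[of Z Zi] by (simp add: rho_Z rho_Zi)
lemma rho_sum: "\<rho> (sum f S) = (\<Sum>x\<in>S. \<rho> (f x))"
  by (induction S rule: infinite_finite_induct) (auto simp: rho_add)
lemma rho_pow: "\<rho> (x ^ n) = \<rho> x ^ n"
  by (induction n) (simp_all add: rho_mult)
lemma rho_zpow: "\<rho> (zpow X Xi k) = zpow (\<rho> X) (\<rho> Xi) k"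
  by (simp add: zpow_def rho_pow)
lemma rho_lp: "\<rho> (lp emb r X Xi) = lp emb (cnj \<circ> r) (\<rho> X) (\<rho> Xi)"
  by (simp add: lp_def rho_sum rho_emb rho_zpow)

lemma al_tt: "al * tt = be"
proof -
  have "al * tt = exp (- (complex_of_real pi * \<i> * complex_of_real c) + 2 * complex_of_real pi * \<i> * complex_of_real c)"
    by (rule exp_add[symmetric])
  also have "\<dots> = be" by (simp add: algebra_simps)
  finally show ?thesis .
qed
lemma be_tt: "be * inverse tt = al"
  using al_tt by (simp add: field_simps)

lemma shiftU: "T ((u * b) * \<rho> (u * b)) = T ((b * v) * \<rho> (b * v))"
proof -
  let ?Y = "b * v * \<rho> b"
  have "(u * b) * \<rho> (u * b) = emb al * (u * ?Y)"
    by (simp add: rho_mult rho_u mult.assoc emb_lc[of b] emb_lcs)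
  then have 1: "T ((u * b) * \<rho> (u * b)) = al * T (u * ?Y)" by (simp add: T_emb)
  have "T (u * ?Y) = T (?Y * (emb tt * u))" using T_tw[of u ?Y] by (simp add: g_u)
  also have "\<dots> = tt * T (?Y * u)" by (simp add: emb_lc[of ?Y] T_emb)
  finally have 2: "T (u * ?Y) = tt * T (?Y * u)" .
  have "(b * v) * \<rho> (b * v) = emb be * (?Y * u)"
    by (simp add: rho_mult rho_v mult.assoc emb_lc[of "\<rho> b"] emb_lc[of b] emb_lcs)
  then have 3: "T ((b * v) * \<rho> (b * v)) = be * T (?Y * u)" by (simp add: T_emb)
  show ?thesis using 1 2 3 al_tt by (simp add: mult.assoc[symmetric])
qed

lemma shiftV: "T ((v * b) * \<rho> (v * b)) = T ((b * u) * \<rho> (b * u))"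
proof -
  let ?Y = "b * u * \<rho> b"
  have "(v * b) * \<rho> (v * b) = emb be * (v * ?Y)"
    by (simp add: rho_mult rho_v mult.assoc emb_lc[of b] emb_lcs)
  then have 1: "T ((v * b) * \<rho> (v * b)) = be * T (v * ?Y)" by (simp add: T_emb)
  have "T (v * ?Y) = T (?Y * (emb (inverse tt) * v))" using T_tw[of v ?Y] by (simp add: g_v)
  also have "\<dots> = inverse tt * T (?Y * v)" by (simp add: emb_lc[of ?Y] T_emb)
  finally have 2: "T (v * ?Y) = inverse tt * T (?Y * v)" .
  have "(b * u) * \<rho> (b * u) = emb al * (?Y * v)"
    by (simp add: rho_mult rho_u mult.assoc emb_lc[of "\<rho> b"] emb_lc[of b] emb_lcs)
  then have 3: "T ((b * u) * \<rho> (b * u)) = al * T (?Y * v)" by (simp add: T_emb)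
  show ?thesis using 1 2 3 be_tt by (simp add: mult.assoc[symmetric])
qed

lemma T_vanish: assumes "x \<in> AD d" "d \<noteq> 0" shows "T x = 0"
proof -
  have "T (Z * x * Zi) = T (x * Zi * g Z)" using T_tw[of Z "x * Zi"] by (simp add: mult.assoc)
  also have "\<dots> = T x" by (metis g_Z ZiZ mult.assoc mult_1_right)
  finally have "T (emb (ee d) * x) = T x" using assms(1) by (simp add: AD_iff)
  then have "(ee d - 1) * T x = 0" by (simp add: T_emb algebra_simps)
  then show ?thesis using ee_ne1[OF assms(2)] by simp
qed

lemma rho_AD: assumes "x \<in> AD d" shows "\<rho> x \<in> AD (- d)"
proof -
  have e: "Z * x * Zi = emb (ee d) * x" using assms by (simp add: AD_iff)
  have "Zi * x * Z = emb (inverse (ee d)) * x"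
  proof -
    have "x = Zi * (Z * x * Zi) * Z" by (metis mult.assoc ZiZ mult_1_left mult_1_right)
    also have "\<dots> = Zi * (emb (ee d) * x) * Z" by (simp only: e)
    also have "\<dots> = emb (ee d) * (Zi * x * Z)" by (simp add: emb_lcs mult.assoc)
    finally have "x = emb (ee d) * (Zi * x * Z)" .
    then have "emb (inverse (ee d)) * x = emb (inverse (ee d)) * (emb (ee d) * (Zi * x * Z))"
      by (rule arg_cong)
    also have "\<dots> = Zi * x * Z"
    proof -
      have ii: "inverse (ee d) * ee d = 1" using ee_nz[of d] by simp
      show ?thesis by (simp only: emb_emb ii emb_1 mult_1_left)
    qed
    finally have "emb (inverse (ee d)) * x = Zi * x * Z" .
    then show ?thesis by simp
  qed
  then have "\<rho> (Zi * x * Z) = emb (cnj (inverse (ee d))) * \<rho> x" by (simp add: rho_emb)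
  moreover have "cnj (inverse (ee d)) = ee (- d)"
    using q0 by (simp add: ee_real power_int_minus)
  ultimately show ?thesis by (simp add: AD_iff rho_mult rho_Z rho_Zi)
qed



lemma u_nz: "u \<noteq> 0"
  using nz_single[of "{0}" "\<lambda>_. 1" 1] by (simp add: gwa_mon_def)

lemma J_ne:
  assumes ii: "\<forall>a\<in>AD 0 \<union> AD 1. a \<noteq> 0 \<longrightarrow> cpos (T (a * \<rho> a))"
  shows "{j. p j \<noteq> 0} \<noteq> {}"
proof
  assume J: "{j. p j \<noteq> 0} = {}"
  have "u * v = 0" unfolding uv_sum J by simp
  then have "u * \<rho> u = 0" by (simp add: rho_u emb_lcs)
  moreover have "cpos (T (u * \<rho> u))" using ii u_AD u_nz by blast
  ultimately show False by (simp add: cpos_def)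
qed

lemma claimP:
  assumes ii: "\<forall>a\<in>AD 0 \<union> AD 1. a \<noteq> 0 \<longrightarrow> cpos (T (a * \<rho> a))"
  shows "\<forall>a\<in>AD (int n). a \<noteq> 0 \<longrightarrow> cpos (T (a * \<rho> a))"
proof (induction n rule: less_induct)
  case (less n)
  show ?case
  proof (cases n)
    case 0 then show ?thesis using ii by simp
  next
    case (Suc n')
    show ?thesis
    proof (cases n')
      case 0 then show ?thesis using ii Suc by simp
    next
      case (Suc m)
      show ?thesis
      proof (intro ballI impI)
        fix x assume x: "x \<in> AD (int n)" "x \<noteq> 0"
        then have x': "x \<in> AD (int (Suc (Suc m)))" using Suc \<open>n = Suc n'\<close> by simp
        obtain b where b: "x = u * b" "b * v \<in> AD (int m)" "b * v \<noteq> 0"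
          using red_pos_alg[OF x' x(2) J_ne[OF ii]] by blast
        have "cpos (T ((b * v) * \<rho> (b * v)))" using less[of m] b Suc \<open>n = Suc n'\<close> by simp
        then show "cpos (T (x * \<rho> x))" using b(1) shiftU by simp
      qed
    qed
  qed
qed

lemma claimN:
  assumes ii: "\<forall>a\<in>AD 0 \<union> AD 1. a \<noteq> 0 \<longrightarrow> cpos (T (a * \<rho> a))"
  shows "\<forall>a\<in>AD (- int (Suc n)). a \<noteq> 0 \<longrightarrow> cpos (T (a * \<rho> a))"
proof (induction n rule: less_induct)
  case (less n)
  show ?case
  proof (intro ballI impI)
    fix x assume x: "x \<in> AD (- int (Suc n))" "x \<noteq> 0"
    obtain b where b: "x = v * b" "b * u \<in> AD (- int n + 1)" "b * u \<noteq> 0"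
      using red_neg_alg[OF x J_ne[OF ii]] by blast
    have "cpos (T ((b * u) * \<rho> (b * u)))"
    proof (cases n)
      case 0 then show ?thesis using ii b by simp
    next
      case (Suc n')
      show ?thesis
      proof (cases n')
        case 0 then show ?thesis using ii b Suc by simp
      next
        case (Suc m)
        have "- int n + 1 = - int (Suc m)" using Suc \<open>n = Suc n'\<close> by simp
        then show ?thesis using less[of m] b Suc \<open>n = Suc n'\<close> by simp
      qed
    qed
    then show "cpos (T (x * \<rho> x))" using b(1) shiftV by simp
  qed
qed

lemma claimAll:
  assumes ii: "\<forall>a\<in>AD 0 \<union> AD 1. a \<noteq> 0 \<longrightarrow> cpos (T (a * \<rho> a))"
    and x: "x \<in> AD d" "x \<noteq> 0"
  shows "cpos (T (x * \<rho> x))"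
proof (cases "0 \<le> d")
  case True
  then obtain n where "d = int n" using nonneg_eq_int by blast
  then show ?thesis using claimP[OF ii, of n] x by blast
next
  case False
  then have "d = - int (Suc (nat (- d - 1)))" by simp
  then show ?thesis using claimN[OF ii, of "nat (- d - 1)"] x by (metis (no_types))
qed


lemma pos_from_ii:
  assumes ii: "\<forall>a\<in>AD 0 \<union> AD 1. a \<noteq> 0 \<longrightarrow> cpos (T (a * \<rho> a))"
  shows "positive_trace \<rho> T"
  unfolding positive_trace_def
proof (intro allI impI)
  fix a :: 'a assume anz: "a \<noteq> 0"
  obtain S c where fS: "finite S" and ae: "a = (\<Sum>pk\<in>S. emb (c pk) * M (fst pk) (snd pk))"
    using span' by blast
  define D where "D = fst ` S"
  have fD: "finite D" using fS by (simp add: D_def)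
  define ad where "ad d = (\<Sum>pk\<in>{pk. pk \<in> S \<and> fst pk = d}. emb (c pk) * M (fst pk) (snd pk))" for d
  have a_sum: "a = (\<Sum>d\<in>D. ad d)"
    unfolding ae ad_def D_def by (rule sum.group[symmetric]) (use fS in auto)
  have adAD: "ad d \<in> AD d" for d
    unfolding ad_def by (rule AD_sum) (auto intro: AD_emb M_AD)
  have "a * \<rho> a = (\<Sum>d\<in>D. \<Sum>e\<in>D. ad d * \<rho> (ad e))"
    unfolding a_sum rho_sum by (rule sum_product)
  then have Te: "T (a * \<rho> a) = (\<Sum>d\<in>D. \<Sum>e\<in>D. T (ad d * \<rho> (ad e)))"
    by (simp add: T_sum)
  have inner: "(\<Sum>e\<in>D. T (ad d * \<rho> (ad e))) = T (ad d * \<rho> (ad d))" if "d \<in> D" for d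
  proof -
    have "(\<Sum>e\<in>D. T (ad d * \<rho> (ad e))) = T (ad d * \<rho> (ad d)) + (\<Sum>e\<in>D - {d}. T (ad d * \<rho> (ad e)))"
      by (rule sum.remove[OF fD that])
    also have "(\<Sum>e\<in>D - {d}. T (ad d * \<rho> (ad e))) = 0"
    proof (rule sum.neutral, rule ballI)
      fix e assume "e \<in> D - {d}"
      then have "d + - e \<noteq> 0" by auto
      moreover have "ad d * \<rho> (ad e) \<in> AD (d + - e)" by (rule AD_mult[OF adAD rho_AD[OF adAD]])
      ultimately show "T (ad d * \<rho> (ad e)) = 0" using T_vanish by blast
    qed
    finally show ?thesis by simp
  qed
  have Te2: "T (a * \<rho> a) = (\<Sum>d\<in>D. T (ad d * \<rho> (ad d)))"
    unfolding Te by (rule sum.cong[OF refl]) (rule inner)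
  obtain d0 where d0: "d0 \<in> D" "ad d0 \<noteq> 0"
  proof (rule ccontr)
    assume "\<not> thesis"
    then have "\<forall>d\<in>D. ad d = 0" using that by blast
    then have "a = 0" unfolding a_sum by simp
    then show False using anz by simp
  qed
  show "cpos (T (a * \<rho> a))"
    unfolding Te2
  proof (rule cpos_sum[OF fD _ d0(1)])
    show "\<forall>d\<in>D. T (ad d * \<rho> (ad d)) = 0 \<or> cpos (T (ad d * \<rho> (ad d)))"
    proof
      fix d assume "d \<in> D"
      show "T (ad d * \<rho> (ad d)) = 0 \<or> cpos (T (ad d * \<rho> (ad d)))"
      proof (cases "ad d = 0")
        case True then show ?thesis by simp
      next
        case False then show ?thesis using claimAll[OF ii adAD] by blast
      qed
    qed
    show "cpos (T (ad d0 * \<rho> (ad d0)))" using claimAll[OF ii adAD d0(2)] .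
  qed
qed


lemma key1:
  "T ((u * lp emb r (emb (complex_of_real q) * Z) (emb (complex_of_real (inverse q)) * Zi))
      * \<rho> (u * lp emb r (emb (complex_of_real q) * Z) (emb (complex_of_real (inverse q)) * Zi)))
   = al * T (lp emb p (emb (complex_of_real (inverse q)) * Z) (emb (complex_of_real q) * Zi)
                   * lp emb r (emb (complex_of_real (inverse q)) * Z) (emb (complex_of_real q) * Zi)
                   * lp emb (cnj \<circ> r) (emb (complex_of_real q) * Zi) (emb (complex_of_real (inverse q)) * Z))"
proof -
  let ?R = "lp emb r (emb (complex_of_real q) * Z) (emb (complex_of_real (inverse q)) * Zi)"
  let ?L = "lp emb r (emb (complex_of_real (inverse q)) * Z) (emb (complex_of_real q) * Zi)"
  let ?Rb = "lp emb (cnj \<circ> r) (emb (complex_of_real q) * Zi) (emb (complex_of_real (inverse q)) * Z)"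
  let ?P = "lp emb p (emb (complex_of_real (inverse q)) * Z) (emb (complex_of_real q) * Zi)"
  have rR: "\<rho> ?R = ?Rb" by (simp add: rho_lp rho_emb rho_Z rho_Zi)
  have c1: "complex_of_real q * complex_of_real (inverse q ^ 2) = complex_of_real (inverse q)"
    using q0 by (simp add: power2_eq_square field_simps)
  have c2: "complex_of_real (inverse q) * complex_of_real (q ^ 2) = complex_of_real q"
    using q0 by (simp add: power2_eq_square field_simps)
  have s1: "(emb (complex_of_real q) * Z) * v = v * (emb (complex_of_real (inverse q)) * Z)"
  proof -
    have "(emb (complex_of_real q) * Z) * v = emb (complex_of_real q) * (Z * v)" by (simp only: mult.assoc)
    also have "\<dots> = v * (emb (complex_of_real q * complex_of_real (inverse q ^ 2)) * Z)"
      by (simp only: Zv2 emb_lcs emb_emb)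
    finally show ?thesis by (simp only: c1)
  qed
  have s2: "(emb (complex_of_real (inverse q)) * Zi) * v = v * (emb (complex_of_real q) * Zi)"
  proof -
    have "(emb (complex_of_real (inverse q)) * Zi) * v = emb (complex_of_real (inverse q)) * (Zi * v)" by (simp only: mult.assoc)
    also have "\<dots> = v * (emb (complex_of_real (inverse q) * complex_of_real (q ^ 2)) * Zi)"
      by (simp only: Ziv2 emb_lcs emb_emb)
    finally show ?thesis by (simp only: c2)
  qed
  have Rv: "?R * v = v * ?L" by (rule lp_comm[OF s1 s2])
  have "(u * ?R) * \<rho> (u * ?R) = u * ?R * (emb al * v * ?Rb)" by (simp only: rho_mult rho_u rR)
  also have "\<dots> = emb al * (u * (?R * v) * ?Rb)" by (simp only: mult.assoc emb_lc[of "?R"] emb_lcs)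
  also have "\<dots> = emb al * (u * v * ?L * ?Rb)" by (simp only: Rv mult.assoc)
  also have "\<dots> = emb al * (?P * ?L * ?Rb)" by (simp only: uv)
  finally show ?thesis by (simp only: T_emb)
qed

lemma Rsum: "lp emb r (emb (complex_of_real q) * Z) (emb (complex_of_real (inverse q)) * Zi)
   = (\<Sum>k\<in>{k. r k \<noteq> 0}. emb (r k * complex_of_real q powi k) * zp k)"
proof -
  have nz: "complex_of_real q \<noteq> 0" using q0 by simp
  show ?thesis using lp_scale[OF nz, of r] by (simp only: of_real_inverse)
qed

lemma uR_sum: "u * lp emb r (emb (complex_of_real q) * Z) (emb (complex_of_real (inverse q)) * Zi)
   = (\<Sum>k\<in>{k. r k \<noteq> 0}. emb (r k * complex_of_real q powi k) * M 1 k)"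
  unfolding Rsum sum_distrib_left
  by (rule sum.cong[OF refl]) (simp add: emb_lcs gwa_mon_def)

lemma lpZ_M: "lp emb r Z Zi = (\<Sum>k\<in>{k. r k \<noteq> 0}. emb (r k) * M 0 k)"
  by (simp add: lpZ gwa_mon_def)

lemma rho_lpZ: "\<rho> (lp emb r Z Zi) = lp emb (cnj \<circ> r) Zi Z"
  by (simp add: rho_lp rho_Z rho_Zi)

lemma iii_from_ii:
  assumes ii: "\<forall>a\<in>AD 0 \<union> AD 1. a \<noteq> 0 \<longrightarrow> cpos (T (a * \<rho> a))"
    and r: "finite {k. r k \<noteq> 0}" "\<exists>k. r k \<noteq> 0"
  shows "cpos (T (lp emb r Z Zi * lp emb (cnj \<circ> r) Zi Z)) \<and>
              cpos (al *
                T (lp emb p (emb (complex_of_real (inverse q)) * Z) (emb (complex_of_real q) * Zi)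
                   * lp emb r (emb (complex_of_real (inverse q)) * Z) (emb (complex_of_real q) * Zi)
                   * lp emb (cnj \<circ> r) (emb (complex_of_real q) * Zi) (emb (complex_of_real (inverse q)) * Z)))"
proof
  have ne: "{k. r k \<noteq> 0} \<noteq> {}" using r(2) by blast
  have "lp emb r Z Zi \<in> AD 0" unfolding lpZ_M by (rule AD_sumM)
  moreover have "lp emb r Z Zi \<noteq> 0" unfolding lpZ_M by (rule nz_single[OF r(1) ne]) simp
  ultimately have "cpos (T (lp emb r Z Zi * \<rho> (lp emb r Z Zi)))" using ii by blast
  then show "cpos (T (lp emb r Z Zi * lp emb (cnj \<circ> r) Zi Z))" by (simp only: rho_lpZ)
  let ?a = "u * lp emb r (emb (complex_of_real q) * Z) (emb (complex_of_real (inverse q)) * Zi)"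
  have "?a \<in> AD 1" unfolding uR_sum by (rule AD_sumM)
  moreover have "?a \<noteq> 0" unfolding uR_sum by (rule nz_single[OF r(1) ne]) (use q0 in simp)
  ultimately have "cpos (T (?a * \<rho> ?a))" using ii by blast
  then show "cpos (al *
                T (lp emb p (emb (complex_of_real (inverse q)) * Z) (emb (complex_of_real q) * Zi)
                   * lp emb r (emb (complex_of_real (inverse q)) * Z) (emb (complex_of_real q) * Zi)
                   * lp emb (cnj \<circ> r) (emb (complex_of_real q) * Zi) (emb (complex_of_real (inverse q)) * Z)))"
    by (simp only: key1)
qed

lemma ii_from_iii:
  assumes iii: "\<forall>r. finite {k. r k \<noteq> 0} \<and> (\<exists>k. r k \<noteq> 0) \<longrightarrow>
              cpos (T (lp emb r Z Zi * lp emb (cnj \<circ> r) Zi Z)) \<and>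
              cpos (al *
                T (lp emb p (emb (complex_of_real (inverse q)) * Z) (emb (complex_of_real q) * Zi)
                   * lp emb r (emb (complex_of_real (inverse q)) * Z) (emb (complex_of_real q) * Zi)
                   * lp emb (cnj \<circ> r) (emb (complex_of_real q) * Zi) (emb (complex_of_real (inverse q)) * Z)))"
  shows "\<forall>a\<in>AD 0 \<union> AD 1. a \<noteq> 0 \<longrightarrow> cpos (T (a * \<rho> a))"
proof (intro ballI impI)
  fix a assume a: "a \<in> AD 0 \<union> AD 1" and anz: "a \<noteq> 0"
  show "cpos (T (a * \<rho> a))"
  proof (cases "a \<in> AD 0")
    case True
    obtain K s where fK: "finite K" and sK: "\<forall>k\<in>K. s k \<noteq> 0" and ae: "a = (\<Sum>k\<in>K. emb (s k) * M 0 k)"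
      using rep[OF True] by blast
    define r where "r k = (if k \<in> K then s k else 0)" for k
    have supp: "{k. r k \<noteq> 0} = K" using sK by (auto simp: r_def)
    have aeq: "a = lp emb r Z Zi" unfolding lpZ_M supp ae by (rule sum.cong[OF refl]) (simp add: r_def)
    have "K \<noteq> {}" using anz ae by auto
    then have ex: "\<exists>k. r k \<noteq> 0" using supp by blast
    have fin: "finite {k. r k \<noteq> 0}" using fK supp by simp
    have "cpos (T (lp emb r Z Zi * lp emb (cnj \<circ> r) Zi Z))"
      using iii[rule_format, OF conjI[OF fin ex]] by blast
    then show ?thesis unfolding aeq rho_lpZ .
  next
    case False
    then have a1: "a \<in> AD 1" using a by blast
    obtain K s where fK: "finite K" and sK: "\<forall>k\<in>K. s k \<noteq> 0" and ae: "a = (\<Sum>k\<in>K. emb (s k) * M 1 k)"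
      using rep[OF a1] by blast
    define r where "r k = (if k \<in> K then s k / complex_of_real q powi k else 0)" for k
    have supp: "{k. r k \<noteq> 0} = K" using sK q0 by (auto simp: r_def)
    have aeq: "a = u * lp emb r (emb (complex_of_real q) * Z) (emb (complex_of_real (inverse q)) * Zi)"
      unfolding uR_sum supp ae by (rule sum.cong[OF refl]) (use q0 in \<open>simp add: r_def\<close>)
    have "K \<noteq> {}" using anz ae by auto
    then have ex: "\<exists>k. r k \<noteq> 0" using supp by blast
    have fin: "finite {k. r k \<noteq> 0}" using fK supp by simp
    have "cpos (al *
                T (lp emb p (emb (complex_of_real (inverse q)) * Z) (emb (complex_of_real q) * Zi)
                   * lp emb r (emb (complex_of_real (inverse q)) * Z) (emb (complex_of_real q) * Zi)
                   * lp emb (cnj \<circ> r) (emb (complex_of_real q) * Zi) (emb (complex_of_real (inverse q)) * Z)))"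
      using iii[rule_format, OF conjI[OF fin ex]] by blast
    then show ?thesis unfolding aeq key1 .
  qed
qed


end


theorem lemma3p2:
  fixes q c :: real and p :: "int \<Rightarrow> complex"
    and emb :: "complex \<Rightarrow> 'a::ring_1" and u v Z Zi :: 'a
    and g \<rho> :: "'a \<Rightarrow> 'a" and T :: "'a \<Rightarrow> complex"
  assumes q: "0 < q" "q < 1"
    and P_fin: "finite {k. p k \<noteq> 0}"
    and P_roots: "\<exists>z. z \<noteq> 0 \<and> Pev p z = 0"
    and P_real: "\<forall>z. cmod z = 1 \<longrightarrow> Pev p z \<in> \<real>"
    and A: "is_A_P q p emb u v Z Zi"
    and c: "0 \<le> c" "c < 1"
    and g: "is_g emb u v Z Zi (exp (2 * complex_of_real pi * \<i> * complex_of_real c)) g"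
    and rho: "is_rho emb u v Z Zi c \<rho>"
    and T: "twisted_trace emb g T"
  shows "(positive_trace \<rho> T \<longleftrightarrow>
           (\<forall>a \<in> Adeg q emb Z Zi 0 \<union> Adeg q emb Z Zi 1. a \<noteq> 0 \<longrightarrow> cpos (T (a * \<rho> a))))
       \<and> ((\<forall>a \<in> Adeg q emb Z Zi 0 \<union> Adeg q emb Z Zi 1. a \<noteq> 0 \<longrightarrow> cpos (T (a * \<rho> a))) \<longleftrightarrow>
           (\<forall>r. finite {k. r k \<noteq> 0} \<and> (\<exists>k. r k \<noteq> 0) \<longrightarrow>
              cpos (T (lp emb r Z Zi * lp emb (cnj \<circ> r) Zi Z)) \<and>
              cpos (exp (- (complex_of_real pi * \<i> * complex_of_real c)) *
                T (lp emb p (emb (complex_of_real (inverse q)) * Z) (emb (complex_of_real q) * Zi)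
                   * lp emb r (emb (complex_of_real (inverse q)) * Z) (emb (complex_of_real q) * Zi)
                   * lp emb (cnj \<circ> r) (emb (complex_of_real q) * Zi) (emb (complex_of_real (inverse q)) * Z)))))"
  proof -
  interpret gwa2 q p emb u v Z Zi c g \<rho> T
    using q P_fin A g rho T by unfold_locales auto
  have i_ii: "positive_trace \<rho> T \<Longrightarrow> (\<forall>a \<in> Adeg q emb Z Zi 0 \<union> Adeg q emb Z Zi 1. a \<noteq> 0 \<longrightarrow> cpos (T (a * \<rho> a)))"
    unfolding positive_trace_def by blast
  show ?thesis
    using i_ii pos_from_ii iii_from_ii ii_from_iii by blast
qed

end
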